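(* Let $G$ be an $(n,n,p_s,p_d)$-two-island network with groups $V_1,V_2$ and degree of homophily $h_G=p_s/p_d$, and let the dual opinions evolve according to the dynamics in the context with common resilience $\phi\in(0,1)$, common bias $b$ with $\frac{2}{\phi(h_G-1)+2}<b<1$, and the symmetric initial condition $x_i(0)=x_0\in(\tfrac12,1)$, $y_i(0)=y_0\in[\tfrac12,x_0]$ for $i\in V_1$, $x_j(0)=1-x_0$, $y_j(0)=1-y_0$ for $j\in V_2$. Let $i\in V_1$. If there exists $T>0$ such that $\hat x(\phi,h_G,b)\le x_i(t)<\hat x(1,h_G,b)$ for all $t\ge T$, then there exists $\mathcal T>T$ such that $x_i(t)$ and $y_i(t)$ are monotonic for $t\ge\mathcal T$, and $$\lim_{t\to\infty}x_i(t)=\hat x(\phi,h_G,b),\qquad \lim_{t\to\infty}y_i(t)=\frac{\phi(h_G+1)\hat x(\phi,h_G,b)+1-\phi}{\phi h_G+2-\phi}.$$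
   Context: Let $n\ge 1$ and $p_s,p_d\in(0,1)$ with $p_s>p_d$ and $np_s,np_d$ positive integers. An $(n,n,p_s,p_d)$-two-island network is an undirected graph (no self-loops) with vertex set $V=V_1\cup V_2$, $V_1\cap V_2=\emptyset$, $|V_1|=|V_2|=n$, such that each node of $V_1$ has exactly $np_s$ neighbours in $V_1$ and $np_d$ neighbours in $V_2$, and each node of $V_2$ has exactly $np_s$ neighbours in $V_2$ and $np_d$ neighbours in $V_1$. Its degree of homophily is $h_G=p_s/p_d>1$. Let $w_{ij}\in\{0,1\}$ be the adjacency matrix, $N_i$ the set of neighbours of $i$, and $d_i=\sum_{j\in N_i}w_{ij}$. Dual opinions dynamics: each $i\in V$ has $x_i(t),y_i(t)\in[0,1]$, $t=0,1,2,\dots$, updated by $$x_i(t+1)=\frac{x_i(t)^{b}s_i(t)}{x_i(t)^{b}s_i(t)+(1-x_i(t))^{b}(d_i-s_i(t))},\qquad y_i(t+1)=\phi\, x_i(t+1)+(1-\phi)\hat y_{i,avg}(t),$$ with $s_i(t)=\sum_{j\in N_i}w_{ij}y_j(t)$ and $\hat y_{i,avg}(t)=\sum_{j\in N_i}\frac{w_{ij}}{d_i}y_j(t)$. For $0<b<1$ define $g(x,b)=\frac{x^{1-b}-(1-x)^{1-b}}{x(1-x)^{1-b}-(1-x)x^{1-b}}$ for $x\in(\tfrac12,1)$ and $g(\tfrac12,b)=\frac2b-2$. For $\psi\in(0,1]$ with $\frac{2}{\psi(h_G-1)+2}<b<1$, $\hat x(\psi,h_G,b)$ denotes the unique solution $x\in(\tfrac12,1)$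 of $g(x,b)=\psi(h_G-1)$ (in particular $\hat x(1,h_G,b)$ solves $g(x,b)=h_G-1$). *)

theory Defs
  imports "HOL-Analysis.Analysis"
begin

text \<open>An undirected graph without self-loops is given by a symmetric, irreflexive
adjacency relation E on the vertex set V1 \<union> V2 (w_ij = 1 iff E i j).\<close>

definition two_island :: "('a \<Rightarrow> 'a \<Rightarrow> bool) \<Rightarrow> 'a set \<Rightarrow> 'a set \<Rightarrow> nat \<Rightarrow> real \<Rightarrow> real \<Rightarrow> bool" where
  "two_island E V1 V2 n ps pd \<longleftrightarrow>
     n \<ge> 1 \<and> 0 < pd \<and> pd < ps \<and> ps < 1 \<and>
     real n * ps \<in> \<nat> \<and> real n * pd \<in> \<nat> \<and> real n * ps > 0 \<and> real n * pd > 0 \<and>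
     finite V1 \<and> finite V2 \<and> V1 \<inter> V2 = {} \<and> card V1 = n \<and> card V2 = n \<and>
     (\<forall>i j. E i j \<longrightarrow> i \<in> V1 \<union> V2 \<and> j \<in> V1 \<union> V2) \<and>
     (\<forall>i j. E i j \<longleftrightarrow> E j i) \<and> (\<forall>i. \<not> E i i) \<and>
     (\<forall>i\<in>V1. real (card {j\<in>V1. E i j}) = real n * ps \<and> real (card {j\<in>V2. E i j}) = real n * pd) \<and>
     (\<forall>i\<in>V2. real (card {j\<in>V2. E i j}) = real n * ps \<and> real (card {j\<in>V1. E i j}) = real n * pd)"

definition nbrs :: "('a \<Rightarrow> 'a \<Rightarrow> bool) \<Rightarrow> 'a \<Rightarrow> 'a set" where
  "nbrs E i = {j. E i j}"

definition deg :: "('a \<Rightarrow> 'a \<Rightarrow> bool) \<Rightarrow> 'a \<Rightarrow> real" where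
  "deg E i = real (card (nbrs E i))"

definition sval :: "('a \<Rightarrow> 'a \<Rightarrow> bool) \<Rightarrow> ('a \<Rightarrow> real) \<Rightarrow> 'a \<Rightarrow> real" where
  "sval E y i = (\<Sum>j\<in>nbrs E i. y j)"

definition dual_dynamics :: "('a \<Rightarrow> 'a \<Rightarrow> bool) \<Rightarrow> 'a set \<Rightarrow> real \<Rightarrow> real
    \<Rightarrow> (nat \<Rightarrow> 'a \<Rightarrow> real) \<Rightarrow> (nat \<Rightarrow> 'a \<Rightarrow> real) \<Rightarrow> bool" where
  "dual_dynamics E V phi b x y \<longleftrightarrow>
    (\<forall>t. \<forall>i\<in>V.
       x (Suc t) i = (x t i powr b * sval E (y t) i) /
                     (x t i powr b * sval E (y t) i + (1 - x t i) powr b * (deg E i - sval E (y t) i)) \<and>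
       y (Suc t) i = phi * x (Suc t) i + (1 - phi) * (sval E (y t) i / deg E i))"

definition g_fun :: "real \<Rightarrow> real \<Rightarrow> real" where
  "g_fun x b = (if x = 1/2 then 2 / b - 2 else
     (x powr (1 - b) - (1 - x) powr (1 - b)) / (x * (1 - x) powr (1 - b) - (1 - x) * x powr (1 - b)))"

definition x_hat :: "real \<Rightarrow> real \<Rightarrow> real \<Rightarrow> real" where
  "x_hat psi h b = (THE x. 1/2 < x \<and> x < 1 \<and> g_fun x b = psi * (h - 1))"

end

theory Submission
  imports Defs
begin

definition Kf :: "real \<Rightarrow> real \<Rightarrow> real \<Rightarrow> real" where
  "Kf c b x = ln (1 + c*x) - ln (1 + c - c*x) - (1-b) * ln x + (1-b) * ln (1-x)"

lemma pos_aux: fixes c x :: real assumes "0 < c" "0 < x" "x < 1" shows "0 < 1 + c*x" "0 < 1 + c - c*x" "c*x < c"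
proof -
  show "c*x < c" using assms mult_strict_left_mono[of x 1 c] by simp
  moreover have "0 < c*x" using assms by simp
  ultimately show "0 < 1 + c*x" "0 < 1 + c - c*x" by linarith+
qed

lemma Kf_deriv:
  assumes "0 < c" "0 < x" "x < 1"
  shows "(Kf c b has_real_derivative (c/(1+c*x) + c/(1+c-c*x) - (1-b)/x - (1-b)/(1-x))) (at x)"
proof -
  note p = pos_aux[OF assms]
  have e1: "((\<lambda>x. 1 + c*x) has_real_derivative (0 + c*1)) (at x)"
    by (intro DERIV_add DERIV_const DERIV_cmult DERIV_ident)
  have l1: "((\<lambda>x. ln (1 + c*x)) has_real_derivative inverse (1 + c*x) * (0 + c*1)) (at x)"
    by (rule DERIV_chain2[OF DERIV_ln[OF p(1)] e1])
  have e2: "((\<lambda>x. 1 + c - c*x) has_real_derivative (0 - c*1)) (at x)"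
    by (intro DERIV_diff DERIV_const DERIV_cmult DERIV_ident)
  have l2: "((\<lambda>x. ln (1 + c - c*x)) has_real_derivative inverse (1 + c - c*x) * (0 - c*1)) (at x)"
    by (rule DERIV_chain2[OF DERIV_ln[OF p(2)] e2])
  have l3: "((\<lambda>x. (1-b) * ln x) has_real_derivative (1-b) * inverse x) (at x)"
    by (rule DERIV_cmult[OF DERIV_ln[OF assms(2)]])
  have e4: "((\<lambda>x. 1 - x) has_real_derivative (0 - 1)) (at x)"
    by (intro DERIV_diff DERIV_const DERIV_ident)
  have "0 < 1 - x" using assms by simp
  have l4': "((\<lambda>x. ln (1 - x)) has_real_derivative inverse (1 - x) * (0 - 1)) (at x)"
    by (rule DERIV_chain2[OF DERIV_ln[OF \<open>0 < 1 - x\<close>] e4])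
  have l4: "((\<lambda>x. (1-b) * ln (1 - x)) has_real_derivative (1-b) * (inverse (1 - x) * (0 - 1))) (at x)"
    by (rule DERIV_cmult[OF l4'])
  have tot: "((\<lambda>x. ln (1 + c*x) - ln (1 + c - c*x) - (1-b) * ln x + (1-b) * ln (1-x)) has_real_derivative
     (inverse (1 + c*x) * (0 + c*1) - inverse (1 + c - c*x) * (0 - c*1) - (1-b) * inverse x
      + (1-b) * (inverse (1 - x) * (0 - 1)))) (at x)"
    by (rule DERIV_add[OF DERIV_diff[OF DERIV_diff[OF l1 l2] l3] l4])
  have eq: "inverse (1 + c*x) * (0 + c*1) - inverse (1 + c - c*x) * (0 - c*1) - (1-b) * inverse x
      + (1-b) * (inverse (1 - x) * (0 - 1)) = c/(1+c*x) + c/(1+c-c*x) - (1-b)/x - (1-b)/(1-x)"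
    by (simp add: divide_inverse algebra_simps)
  have "Kf c b = (\<lambda>x. ln (1 + c*x) - ln (1 + c - c*x) - (1-b) * ln x + (1-b) * ln (1-x))"
    by (rule ext) (simp add: Kf_def)
  then show ?thesis using DERIV_cong[OF tot eq] by simp
qed

lemma Kf_half: "Kf c b (1/2) = 0"
  unfolding Kf_def by (simp add: field_simps)

lemma Kf_cont: assumes "0 < c" "0 < a" "bb < 1" shows "continuous_on {a..bb} (Kf c b)"
proof -
  have "\<forall>x\<in>{a..bb}. isCont (Kf c b) x"
  proof
    fix x assume "x \<in> {a..bb}"
    then have "0 < x" "x < 1" using assms by auto
    then show "isCont (Kf c b) x" using Kf_deriv[OF assms(1)] DERIV_isCont by blast
  qed
  then show ?thesis by (simp add: continuous_at_imp_continuous_on)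
qed

lemma Kf_diff: assumes "0 < c" "0 < x" "x < 1" shows "Kf c b differentiable (at x)"
  unfolding real_differentiable_def using Kf_deriv[OF assms] by blast

lemma crit_eq:
  fixes c z b :: real
  assumes "0 < c" "0 < z" "z < 1"
    and h: "c/(1+c*z) + c/(1+c-c*z) - (1-b)/z - (1-b)/(1-z) = 0"
  shows "z*(1-z)*(c*(2+c) - (1-b)*c^2) = (1-b)*(1+c)"
proof -
  note p = pos_aux[OF assms(1-3)]
  have "0 < 1 - z" using assms by simp
  have "c/(1+c*z) + c/(1+c-c*z) = (1-b)/z + (1-b)/(1-z)" using h by linarith
  moreover have "c/(1+c*z) + c/(1+c-c*z) = (c*(1+c-c*z) + c*(1+c*z))/((1+c*z)*(1+c-c*z))"
    by (rule add_frac_eq) (use p in simp_all)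
  moreover have "(1-b)/z + (1-b)/(1-z) = ((1-b)*(1-z) + (1-b)*z)/(z*(1-z))"
    by (rule add_frac_eq) (use assms \<open>0 < 1 - z\<close> in simp_all)
  ultimately have "(c*(1+c-c*z) + c*(1+c*z))/((1+c*z)*(1+c-c*z)) = ((1-b)*(1-z) + (1-b)*z)/(z*(1-z))"
    by simp
  moreover have "(1+c*z)*(1+c-c*z) \<noteq> 0"
  proof -
    have "0 < (1+c*z)*(1+c-c*z)" by (rule mult_pos_pos[OF p(1) p(2)])
    then show ?thesis by linarith
  qed
  moreover have "z*(1-z) \<noteq> 0" using assms \<open>0 < 1 - z\<close> by simp
  ultimately have "(c*(1+c-c*z) + c*(1+c*z)) * (z*(1-z)) = ((1-b)*(1-z) + (1-b)*z) * ((1+c*z)*(1+c-c*z))"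
    by (simp add: frac_eq_eq)
  then show ?thesis by algebra
qed

lemma Kf_unique_lt:
  assumes c: "0 < c" and b: "0 < b" "b < 1"
    and x: "1/2 < x1" "x1 < x2" "x2 < 1" and k: "Kf c b x1 = 0" "Kf c b x2 = 0"
  shows False
proof -
  obtain z1 where z1: "1/2 < z1" "z1 < x1" "DERIV (Kf c b) z1 :> 0"
    using Rolle[of "1/2" x1 "Kf c b"] Kf_half[of c b] k Kf_cont[OF c, of "1/2" x1] Kf_diff[OF c] x by auto
  obtain z2 where z2: "x1 < z2" "z2 < x2" "DERIV (Kf c b) z2 :> 0"
    using Rolle[of x1 x2 "Kf c b"] k Kf_cont[OF c, of x1 x2] Kf_diff[OF c] x by auto
  have "c/(1+c*z1) + c/(1+c-c*z1) - (1-b)/z1 - (1-b)/(1-z1) = 0"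
    using DERIV_unique[OF Kf_deriv[OF c, of z1 b] z1(3)] z1 x by simp
  then have v1: "z1*(1-z1)*(c*(2+c) - (1-b)*c^2) = (1-b)*(1+c)" using crit_eq c z1 x by simp
  have "c/(1+c*z2) + c/(1+c-c*z2) - (1-b)/z2 - (1-b)/(1-z2) = 0"
    using DERIV_unique[OF Kf_deriv[OF c, of z2 b] z2(3)] z2 x by simp
  then have v2: "z2*(1-z2)*(c*(2+c) - (1-b)*c^2) = (1-b)*(1+c)" using crit_eq c z2 x by simp
  have "c*(2+c) - (1-b)*c^2 = 2*c + b*c^2" by algebra
  moreover have "0 < 2*c + b*c^2"
  proof -
    have "0 < b*c^2" using b c by simp
    then show ?thesis using c by linarith
  qed
  ultimately have C: "c*(2+c) - (1-b)*c^2 \<noteq> 0" by simp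
  have "z1*(1-z1) = z2*(1-z2)" using v1 v2 C mult_right_cancel by metis
  moreover have "(z2 - z1)*(1 - z1 - z2) = z2*(1-z2) - z1*(1-z1)" by algebra
  ultimately have "(z2 - z1)*(1 - z1 - z2) = 0" by simp
  moreover have "(z2 - z1)*(1 - z1 - z2) < 0" using z1 z2 by (intro mult_pos_neg) auto
  ultimately show False by linarith
qed

lemma Kf_exists:
  assumes c: "0 < c" and b: "0 < b" "b < 1" and bc: "2 < b*(c+2)"
  shows "\<exists>x. 1/2 < x \<and> x < 1 \<and> Kf c b x = 0"
proof -
  have h1: "1 + c*(1/2) = (2+c)/2" "1+c-c*(1/2) = (2+c)/2" by simp_all
  have D: "c/(1+c*(1/2)) + c/(1+c-c*(1/2)) - (1-b)/(1/2) - (1-b)/(1-1/2) = 2*c/(2+c) + 2*c/(2+c) - 4*(1-b)"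
    unfolding h1 by simp
  have e: "(1-b)*(2+c) = 2 + c - b*(c+2)" by algebra
  have "(1-b)*(2+c) < c" unfolding e using bc by linarith
  moreover have "2*(1-b)*(2+c) = 2*((1-b)*(2+c))" by algebra
  ultimately have "2*(1-b)*(2+c) < 2*c" by linarith
  then have "2*(1-b) < 2*c/(2+c)" using c by (subst pos_less_divide_eq) auto
  then have "0 < c/(1+c*(1/2)) + c/(1+c-c*(1/2)) - (1-b)/(1/2) - (1-b)/(1-1/2)" using D by simp
  from DERIV_pos_inc_right[OF Kf_deriv[OF c, of "1/2" b] this]
  obtain d where d: "d > 0" "\<forall>h>0. h < d \<longrightarrow> Kf c b (1/2) < Kf c b (1/2 + h)" by auto
  define a where "a = 1/2 + min (d/2) (1/4)"
  have a: "1/2 < a" "a \<le> 3/4" "0 < Kf c b a"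
    using d Kf_half[of c b] unfolding a_def by auto
  define E where "E = exp ((ln (1+c) + 1)/(1-b)) + 3"
  have E3: "3 < E" unfolding E_def by simp
  define xb where "xb = E/(1+E)"
  have xb: "3/4 < xb" "xb < 1" "0 < xb" using E3 unfolding xb_def by (auto simp: field_simps)
  have "1 - xb = 1/(1+E)" unfolding xb_def using E3 by (simp add: field_simps)
  then have lnd: "ln xb - ln (1-xb) = ln E" unfolding xb_def using E3 by (simp add: ln_div)
  have "exp ((ln (1+c) + 1)/(1-b)) \<le> E" unfolding E_def by simp
  then have "ln (exp ((ln (1+c) + 1)/(1-b))) \<le> ln E" using E3 by (subst ln_le_cancel_iff) auto
  then have "(ln (1+c) + 1)/(1-b) \<le> ln E" by simp
  then have lE: "ln (1+c) + 1 \<le> (1-b) * ln E" using b by (simp add: field_simps)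
  note p = pos_aux[OF c xb(3) xb(2)]
  have t1: "ln (1 + c*xb) \<le> ln (1+c)" using p c by simp
  have t2: "0 < ln (1 + c - c*xb)" using p by (intro ln_gt_zero) linarith
  have "Kf c b xb = ln (1 + c*xb) - ln (1 + c - c*xb) - (1-b) * (ln xb - ln (1-xb))"
    unfolding Kf_def by (simp add: algebra_simps)
  then have "Kf c b xb < 0" using lnd lE t1 t2 by simp
  then obtain x where x: "a \<le> x" "x \<le> xb" "Kf c b x = 0"
    using IVT2'[of "Kf c b" xb 0 a] a xb Kf_cont[OF c, of a xb] by auto
  then show ?thesis using a xb by (intro exI[of _ x]) auto
qed

lemma g_iff_K:
  assumes "1/2 < x" "x < 1" "0 < c" "b < 1"
  shows "g_fun x b = c \<longleftrightarrow> Kf c b x = 0"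
proof -
  define r where "r = x powr (1-b)"
  define q where "q = (1-x) powr (1-b)"
  have rq: "q < r" unfolding r_def q_def using assms by (intro powr_less_mono2) auto
  have q0: "0 < q" unfolding q_def using assms by simp
  have r0: "0 < r" using rq q0 by simp
  have x0: "0 < x" using assms by simp
  note p = pos_aux[OF assms(3) x0 assms(2)]
  have a1: "ln ((1 + c*x) * q) = ln (1 + c*x) + (1-b) * ln (1-x)"
    using p q0 unfolding q_def by (simp add: ln_mult)
  have a2: "ln ((1 + c - c*x) * r) = ln (1 + c - c*x) + (1-b) * ln x"
    using p r0 unfolding r_def by (simp add: ln_mult)
  have "Kf c b x = ln ((1 + c*x) * q) - ln ((1+c-c*x) * r)"
    unfolding Kf_def a1 a2 by simp
  hence "Kf c b x = 0 \<longleftrightarrow> ln ((1 + c*x) * q) = ln ((1+c-c*x) * r)" by simp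
  also have "\<dots> \<longleftrightarrow> (1 + c*x) * q = (1+c-c*x) * r"
    using p q0 r0 by (intro ln_inj_iff) auto
  also have "\<dots> \<longleftrightarrow> r - q = c * (x*q - (1-x)*r)" by (auto simp: algebra_simps)
  also have "\<dots> \<longleftrightarrow> (r - q) / (x*q - (1-x)*r) = c"
  proof (cases "x*q - (1-x)*r = 0")
    case True then show ?thesis using rq assms by simp
  next
    case False then show ?thesis by (simp add: divide_eq_eq)
  qed
  also have "\<dots> \<longleftrightarrow> g_fun x b = c" unfolding g_fun_def r_def q_def using assms by auto
  finally show ?thesis by simp
qed

lemma xhat_props:
  assumes b: "0 < b" "b < 1" and c: "0 < psi*(h-1)" and bc: "2 < b*(psi*(h-1)+2)"
  shows "1/2 < x_hat psi h b \<and> x_hat psi h b < 1 \<and> g_fun (x_hat psi h b) b = psi*(h-1)"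
    and "\<And>x. 1/2 < x \<Longrightarrow> x < 1 \<Longrightarrow> g_fun x b = psi*(h-1) \<Longrightarrow> x_hat psi h b = x"
proof -
  have ex1: "\<exists>!x. 1/2 < x \<and> x < 1 \<and> g_fun x b = psi*(h-1)"
  proof -
    obtain x where x: "1/2 < x" "x < 1" "Kf (psi*(h-1)) b x = 0" using Kf_exists[OF c b bc] by auto
    show ?thesis
    proof (rule ex1I[of _ x])
      show "1/2 < x \<and> x < 1 \<and> g_fun x b = psi*(h-1)" using x g_iff_K[OF x(1,2) c b(2)] by simp
    next
      fix y assume y: "1/2 < y \<and> y < 1 \<and> g_fun y b = psi*(h-1)"
      then have ky: "Kf (psi*(h-1)) b y = 0" using g_iff_K[of y "psi*(h-1)" b] c b by simp
      show "y = x"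
      proof (rule ccontr)
        assume "y \<noteq> x"
        then have "y < x \<or> x < y" by linarith
        then show False
          using Kf_unique_lt[OF c b, of y x] Kf_unique_lt[OF c b, of x y] x y ky by auto
      qed
    qed
  qed
  show "1/2 < x_hat psi h b \<and> x_hat psi h b < 1 \<and> g_fun (x_hat psi h b) b = psi*(h-1)"
    unfolding x_hat_def by (rule theI'[OF ex1])
  show "\<And>x. 1/2 < x \<Longrightarrow> x < 1 \<Longrightarrow> g_fun x b = psi*(h-1) \<Longrightarrow> x_hat psi h b = x"
    unfolding x_hat_def using ex1 by (intro the1_equality) auto
qed

definition Fm :: "real \<Rightarrow> real \<Rightarrow> real \<Rightarrow> real" where
  "Fm b u a = u powr b * a / (u powr b * a + (1-u) powr b * (1-a))"

lemma Fm_bounds: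
  assumes "0 < u" "u < 1" "0 < a" "a < 1"
  shows "0 < Fm b u a" "Fm b u a < 1"
proof -
  have n: "0 < u powr b * a" using assms by simp
  have d: "0 < (1-u) powr b * (1-a)" using assms by simp
  show "0 < Fm b u a" unfolding Fm_def using n d by simp
  show "Fm b u a < 1" unfolding Fm_def using n d by simp
qed

lemma Fm_mono:
  assumes b: "0 \<le> b" and u: "0 < u1" "u1 \<le> u2" "u2 < 1" and a: "0 < a1" "a1 \<le> a2" "a2 < 1"
  shows "Fm b u1 a1 \<le> Fm b u2 a2"
proof -
  define n1 where "n1 = u1 powr b * a1"
  define n2 where "n2 = u2 powr b * a2"
  define d1 where "d1 = (1-u1) powr b * (1-a1)"
  define d2 where "d2 = (1-u2) powr b * (1-a2)"
  have pos: "0 < n1" "0 < n2" "0 < d1" "0 < d2" unfolding n1_def n2_def d1_def d2_def using u a by simp_all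
  have "n1 \<le> n2" unfolding n1_def n2_def
    using u a b by (intro mult_mono powr_mono2) auto
  moreover have "d2 \<le> d1" unfolding d1_def d2_def
    using u a b by (intro mult_mono powr_mono2) auto
  ultimately have "n1 * d2 \<le> n2 * d1" using pos by (intro mult_mono) auto
  then have "n1 * (n2 + d2) \<le> n2 * (n1 + d1)" by (simp add: algebra_simps)
  then have "n1 / (n1 + d1) \<le> n2 / (n2 + d2)" using pos by (simp add: divide_simps)
  then show ?thesis unfolding Fm_def n1_def n2_def d1_def d2_def .
qed

lemma Fm_tendsto:
  assumes u: "u \<longlonglongrightarrow> L" and a: "a \<longlonglongrightarrow> M" and "0 < L" "L < 1" "0 < M" "M < 1"
  shows "(\<lambda>t. Fm b (u t) (a t)) \<longlonglongrightarrow> Fm b L M"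
proof -
  have 1: "(\<lambda>t. u t powr b) \<longlonglongrightarrow> L powr b"
    using tendsto_powr[OF u tendsto_const] assms by simp
  have 2: "(\<lambda>t. (1 - u t) powr b) \<longlonglongrightarrow> (1-L) powr b"
    using tendsto_powr[OF tendsto_diff[OF tendsto_const u] tendsto_const] assms by simp
  have 3: "(\<lambda>t. u t powr b * a t) \<longlonglongrightarrow> L powr b * M" by (rule tendsto_mult[OF 1 a])
  have 4: "(\<lambda>t. u t powr b * a t + (1 - u t) powr b * (1 - a t)) \<longlonglongrightarrow> L powr b * M + (1-L) powr b * (1-M)"
    by (rule tendsto_add[OF 3 tendsto_mult[OF 2 tendsto_diff[OF tendsto_const a]]])
  have den: "L powr b * M + (1-L) powr b * (1-M) \<noteq> 0"
    using assms by (intro order.strict_implies_not_eq[symmetric] add_pos_pos) auto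
  show ?thesis unfolding Fm_def by (rule tendsto_divide[OF 3 4 den])
qed

lemma inc_from:
  fixes f :: "nat \<Rightarrow> real"
  assumes "\<forall>s\<ge>TT. f s \<le> f (Suc s)"
  shows "\<forall>s t. TT \<le> s \<longrightarrow> s \<le> t \<longrightarrow> f s \<le> f t"
proof (intro allI impI)
  fix s t :: nat assume st: "TT \<le> s" "s \<le> t"
  from st(2) show "f s \<le> f t"
  proof (induction t rule: dec_induct)
    case base then show ?case by simp
  next
    case (step m) then show ?case using assms st(1) by (meson order_trans le_trans)
  qed
qed

lemma dec_from:
  fixes f :: "nat \<Rightarrow> real"
  assumes "\<forall>s\<ge>TT. f (Suc s) \<le> f s"
  shows "\<forall>s t. TT \<le> s \<longrightarrow> s \<le> t \<longrightarrow> f t \<le> f s"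
proof (intro allI impI)
  fix s t :: nat assume st: "TT \<le> s" "s \<le> t"
  from st(2) show "f t \<le> f s"
  proof (induction t rule: dec_induct)
    case base then show ?case by simp
  next
    case (step m) then show ?case using assms st(1) by (meson order_trans le_trans)
  qed
qed

lemma conv_from:
  fixes f :: "nat \<Rightarrow> real"
  assumes m: "(\<forall>s t. TT \<le> s \<longrightarrow> s \<le> t \<longrightarrow> f s \<le> f t) \<or> (\<forall>s t. TT \<le> s \<longrightarrow> s \<le> t \<longrightarrow> f t \<le> f s)"
    and bd: "\<forall>t. 0 \<le> f t \<and> f t \<le> 1"
  shows "convergent f"
proof -
  have B: "Bseq (\<lambda>n. f (n + TT))" unfolding Bseq_def
    using bd by (intro exI[of _ 1]) (auto simp: abs_le_iff)
  show ?thesis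
  proof (cases "\<forall>s t. TT \<le> s \<longrightarrow> s \<le> t \<longrightarrow> f s \<le> f t")
    case True then show ?thesis using Bseq_monoseq_convergent'_inc[OF B] by blast
  next
    case False then have "\<forall>s t. TT \<le> s \<longrightarrow> s \<le> t \<longrightarrow> f t \<le> f s" using m by blast
    then show ?thesis using Bseq_monoseq_convergent'_dec[OF B] by blast
  qed
qed

lemma sval_split:
  assumes fin: "finite V1" "finite V2" and dis: "V1 \<inter> V2 = {}"
    and edges: "\<forall>i j. E i j \<longrightarrow> i \<in> V1 \<union> V2 \<and> j \<in> V1 \<union> V2"
    and y1: "\<forall>k\<in>V1. yt k = u" and y2: "\<forall>k\<in>V2. yt k = w"
  shows "sval E yt j = real (card {k\<in>V1. E j k}) * u + real (card {k\<in>V2. E j k}) * w"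
    and "deg E j = real (card {k\<in>V1. E j k}) + real (card {k\<in>V2. E j k})"
proof -
  have N: "nbrs E j = {k\<in>V1. E j k} \<union> {k\<in>V2. E j k}" using edges unfolding nbrs_def by auto
  have f1: "finite {k\<in>V1. E j k}" "finite {k\<in>V2. E j k}" using fin by auto
  have d: "{k\<in>V1. E j k} \<inter> {k\<in>V2. E j k} = {}" using dis by auto
  have "sval E yt j = (\<Sum>k\<in>{k\<in>V1. E j k}. yt k) + (\<Sum>k\<in>{k\<in>V2. E j k}. yt k)"
    unfolding sval_def N by (rule sum.union_disjoint[OF f1 d])
  also have "(\<Sum>k\<in>{k\<in>V1. E j k}. yt k) = (\<Sum>k\<in>{k\<in>V1. E j k}. u)" using y1 by (intro sum.cong) auto
  also have "(\<Sum>k\<in>{k\<in>V2. E j k}. yt k) = (\<Sum>k\<in>{k\<in>V2. E j k}. w)" using y2 by (intro sum.cong) auto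
  finally show "sval E yt j = real (card {k\<in>V1. E j k}) * u + real (card {k\<in>V2. E j k}) * w" by simp
  show "deg E j = real (card {k\<in>V1. E j k}) + real (card {k\<in>V2. E j k})"
    unfolding deg_def N using card_Un_disjoint[OF f1 d] by simp
qed


lemma frac_scale:
  fixes D al be S1 S2 :: real
  assumes "0 < D"
  shows "(al*(S1/D))/(al*(S1/D) + be*(S2/D)) = (al*S1)/(al*S1+be*S2)"
proof -
  have "al*(S1/D) + be*(S2/D) = (al*S1+be*S2)/D" by (simp add: add_divide_distrib)
  moreover have "al*(S1/D) = (al*S1)/D" by simp
  ultimately show ?thesis using assms by simp
qed

theorem lemmaB5:
  fixes E :: "'a \<Rightarrow> 'a \<Rightarrow> bool" and V1 V2 :: "'a set" and n :: nat
    and ps pd phi b x0 y0 :: real and x y :: "nat \<Rightarrow> 'a \<Rightarrow> real" and i :: 'a and T :: nat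
  assumes G: "two_island E V1 V2 n ps pd"
    and phi: "0 < phi" "phi < 1"
    and b: "2 / (phi * (ps / pd - 1) + 2) < b" "b < 1"
    and x0: "1/2 < x0" "x0 < 1"
    and y0: "1/2 \<le> y0" "y0 \<le> x0"
    and init1: "\<forall>j\<in>V1. x 0 j = x0 \<and> y 0 j = y0"
    and init2: "\<forall>j\<in>V2. x 0 j = 1 - x0 \<and> y 0 j = 1 - y0"
    and dyn: "dual_dynamics E (V1 \<union> V2) phi b x y"
    and i: "i \<in> V1"
    and T: "T > 0"
    and hyp: "\<forall>t\<ge>T. x_hat phi (ps / pd) b \<le> x t i \<and> x t i < x_hat 1 (ps / pd) b"
  shows "\<exists>TT>T.
      ((\<forall>s t. TT \<le> s \<longrightarrow> s \<le> t \<longrightarrow> x s i \<le> x t i) \<or> (\<forall>s t. TT \<le> s \<longrightarrow> s \<le> t \<longrightarrow> x t i \<le> x s i)) \<and>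
      ((\<forall>s t. TT \<le> s \<longrightarrow> s \<le> t \<longrightarrow> y s i \<le> y t i) \<or> (\<forall>s t. TT \<le> s \<longrightarrow> s \<le> t \<longrightarrow> y t i \<le> y s i)) \<and>
      (\<lambda>t. x t i) \<longlonglongrightarrow> x_hat phi (ps / pd) b \<and>
      (\<lambda>t. y t i) \<longlonglongrightarrow>
        (phi * (ps / pd + 1) * x_hat phi (ps / pd) b + 1 - phi) / (phi * (ps / pd) + 2 - phi)"
proof -
  from G have n1: "n \<ge> 1" and pd0: "0 < pd" and pdps: "pd < ps"
    and P0': "real n * ps > 0" and Q0': "real n * pd > 0" and fin1: "finite V1" and fin2: "finite V2"
    and dis: "V1 \<inter> V2 = {}" and edges: "\<forall>i j. E i j \<longrightarrow> i \<in> V1 \<union> V2 \<and> j \<in> V1 \<union> V2"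
    and deg1: "\<forall>i\<in>V1. real (card {j\<in>V1. E i j}) = real n * ps \<and> real (card {j\<in>V2. E i j}) = real n * pd"
    and deg2: "\<forall>i\<in>V2. real (card {j\<in>V2. E i j}) = real n * ps \<and> real (card {j\<in>V1. E i j}) = real n * pd"
    unfolding two_island_def by auto
  define P where "P = real n * ps"
  define Q where "Q = real n * pd"
  have P0: "0 < P" and Q0: "0 < Q" using P0' Q0' by (simp_all add: P_def Q_def)
  have QP: "Q < P" unfolding P_def Q_def using pdps n1 by simp
  have PQh: "ps / pd = P / Q" unfolding P_def Q_def using n1 by simp
  have PQ0: "0 < P + Q" using P0 Q0 by simp
  have dyn': "\<And>t j. j \<in> V1 \<union> V2 \<Longrightarrow>
       x (Suc t) j = (x t j powr b * sval E (y t) j) /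
                     (x t j powr b * sval E (y t) j + (1 - x t j) powr b * (deg E j - sval E (y t) j)) \<and>
       y (Suc t) j = phi * x (Suc t) j + (1 - phi) * (sval E (y t) j / deg E j)"
    using dyn unfolding dual_dynamics_def by blast
  have step: "\<And>t u w. (\<forall>j\<in>V1. x t j = u \<and> y t j = w) \<Longrightarrow> (\<forall>j\<in>V2. x t j = 1 - u \<and> y t j = 1 - w) \<Longrightarrow>
      0 < u \<Longrightarrow> u < 1 \<Longrightarrow> 0 < w \<Longrightarrow> w < 1 \<Longrightarrow>
     (\<forall>j\<in>V1. x (Suc t) j = Fm b u ((P*w + Q*(1-w))/(P+Q)) \<and>
         y (Suc t) j = phi * Fm b u ((P*w + Q*(1-w))/(P+Q)) + (1-phi) * ((P*w + Q*(1-w))/(P+Q))) \<and>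
     (\<forall>j\<in>V2. x (Suc t) j = 1 - Fm b u ((P*w + Q*(1-w))/(P+Q)) \<and>
         y (Suc t) j = 1 - (phi * Fm b u ((P*w + Q*(1-w))/(P+Q)) + (1-phi) * ((P*w + Q*(1-w))/(P+Q))))"
  proof -
    fix t u w
    assume h1: "\<forall>j\<in>V1. x t j = u \<and> y t j = w" and h2: "\<forall>j\<in>V2. x t j = 1 - u \<and> y t j = 1 - w"
      and u: "0 < u" "u < 1" and w: "0 < w" "w < 1"
    define S1 where "S1 = P*w + Q*(1-w)"
    define S2 where "S2 = P*(1-w) + Q*w"
    define a where "a = S1/(P+Q)"
    have yv1: "\<forall>k\<in>V1. y t k = w" and yv2: "\<forall>k\<in>V2. y t k = 1 - w" using h1 h2 by auto
    note sp = sval_split[OF fin1 fin2 dis edges yv1 yv2]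
    have sv1: "\<And>j. j \<in> V1 \<Longrightarrow> sval E (y t) j = S1 \<and> deg E j = P + Q"
      using sp deg1 unfolding S1_def P_def Q_def by auto
    have sv2: "\<And>j. j \<in> V2 \<Longrightarrow> sval E (y t) j = S2 \<and> deg E j = P + Q"
    proof -
      fix j assume j: "j \<in> V2"
      have c: "real (card {k\<in>V2. E j k}) = P" "real (card {k\<in>V1. E j k}) = Q"
        using deg2 j unfolding P_def Q_def by auto
      show "sval E (y t) j = S2 \<and> deg E j = P + Q"
        using sp(1)[of j] sp(2)[of j] unfolding c S2_def by (simp add: algebra_simps)
    qed
    have S1p: "0 < S1" unfolding S1_def using P0 Q0 w by (intro add_pos_nonneg) auto
    have S2p: "0 < S2" unfolding S2_def using P0 Q0 w by (intro add_pos_nonneg) auto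
    have Ssum: "S1 + S2 = P + Q" unfolding S1_def S2_def by algebra
    have a1: "1 - a = S2/(P+Q)" unfolding a_def using PQ0 Ssum by (simp add: field_simps)
    have up: "0 < u powr b * S1" "0 < (1-u) powr b * S2" using u S1p S2p by simp_all
    have Fm_eq: "Fm b u a = (u powr b * S1)/(u powr b * S1 + (1-u) powr b * S2)"
      unfolding Fm_def a1 unfolding a_def by (rule frac_scale[OF PQ0])
    have V1x: "\<And>j. j \<in> V1 \<Longrightarrow> x (Suc t) j = Fm b u a"
    proof -
      fix j assume j: "j \<in> V1"
      have "P + Q - S1 = S2" using Ssum by simp
      then show "x (Suc t) j = Fm b u a" using dyn'[of j t] j h1 sv1[OF j] Fm_eq by simp
    qed
    have V2x: "\<And>j. j \<in> V2 \<Longrightarrow> x (Suc t) j = 1 - Fm b u a"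
    proof -
      fix j assume j: "j \<in> V2"
      have "P + Q - S2 = S1" using Ssum by simp
      then have "x (Suc t) j = ((1-u) powr b * S2)/((1-u) powr b * S2 + u powr b * S1)"
        using dyn'[of j t] j h2 sv2[OF j] by simp
      also have "\<dots> = 1 - Fm b u a" unfolding Fm_eq using up by (simp add: field_simps)
      finally show "x (Suc t) j = 1 - Fm b u a" .
    qed
    have V1y: "\<And>j. j \<in> V1 \<Longrightarrow> y (Suc t) j = phi * Fm b u a + (1-phi) * a"
      using dyn' V1x sv1 unfolding a_def by auto
    have V2y: "\<And>j. j \<in> V2 \<Longrightarrow> y (Suc t) j = 1 - (phi * Fm b u a + (1-phi) * a)"
    proof -
      fix j assume j: "j \<in> V2"
      have "y (Suc t) j = phi * (1 - Fm b u a) + (1-phi) * (S2/(P+Q))"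
        using dyn'[of j t] j V2x[OF j] sv2[OF j] by simp
      then show "y (Suc t) j = 1 - (phi * Fm b u a + (1-phi) * a)" unfolding a1[symmetric] by algebra
    qed
    show "(\<forall>j\<in>V1. x (Suc t) j = Fm b u ((P*w + Q*(1-w))/(P+Q)) \<and>
         y (Suc t) j = phi * Fm b u ((P*w + Q*(1-w))/(P+Q)) + (1-phi) * ((P*w + Q*(1-w))/(P+Q))) \<and>
     (\<forall>j\<in>V2. x (Suc t) j = 1 - Fm b u ((P*w + Q*(1-w))/(P+Q)) \<and>
         y (Suc t) j = 1 - (phi * Fm b u ((P*w + Q*(1-w))/(P+Q)) + (1-phi) * ((P*w + Q*(1-w))/(P+Q))))"
      using V1x V2x V1y V2y unfolding a_def S1_def by auto
  qed
  define X where "X t = x t i" for t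
  define Y where "Y t = y t i" for t
  define A where "A t = (P * Y t + Q * (1 - Y t)) / (P + Q)" for t
  have A_bd: "\<And>t. 0 < Y t \<Longrightarrow> Y t < 1 \<Longrightarrow> 0 < A t \<and> A t < 1"
  proof -
    fix t assume h: "0 < Y t" "Y t < 1"
    have e: "P * Y t + Q * (1 - Y t) = Q + (P - Q) * Y t" by algebra
    have "0 \<le> (P - Q) * Y t" using QP h by simp
    moreover have "(P - Q) * Y t < P - Q" using QP h mult_strict_left_mono[of "Y t" 1 "P - Q"] by simp
    ultimately have "0 < P * Y t + Q * (1 - Y t)" "P * Y t + Q * (1 - Y t) < P + Q"
      unfolding e using Q0 by linarith+
    then show "0 < A t \<and> A t < 1" unfolding A_def using PQ0 by simp
  qed
  have inv: "\<And>t. (\<forall>j\<in>V1. x t j = X t \<and> y t j = Y t) \<and> (\<forall>j\<in>V2. x t j = 1 - X t \<and> y t j = 1 - Y t)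
       \<and> 0 < X t \<and> X t < 1 \<and> 0 < Y t \<and> Y t < 1"
  proof -
    fix t show "(\<forall>j\<in>V1. x t j = X t \<and> y t j = Y t) \<and> (\<forall>j\<in>V2. x t j = 1 - X t \<and> y t j = 1 - Y t)
       \<and> 0 < X t \<and> X t < 1 \<and> 0 < Y t \<and> Y t < 1"
    proof (induction t)
      case 0
      have "X 0 = x0" "Y 0 = y0" using init1 i unfolding X_def Y_def by auto
      then show ?case using init1 init2 x0 y0 by auto
    next
      case (Suc t)
      then have IH: "\<forall>j\<in>V1. x t j = X t \<and> y t j = Y t" "\<forall>j\<in>V2. x t j = 1 - X t \<and> y t j = 1 - Y t"
        "0 < X t" "X t < 1" "0 < Y t" "Y t < 1" by auto
      have Aeq: "(P * Y t + Q * (1 - Y t)) / (P + Q) = A t" unfolding A_def ..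
      note st = step[OF IH, unfolded Aeq]
      have Ab: "0 < A t" "A t < 1" using A_bd IH by auto
      have XS: "X (Suc t) = Fm b (X t) (A t)" using st i unfolding X_def by auto
      have YS: "Y (Suc t) = phi * Fm b (X t) (A t) + (1-phi) * A t" using st i unfolding Y_def by auto
      have Fb: "0 < Fm b (X t) (A t)" "Fm b (X t) (A t) < 1" using Fm_bounds IH Ab by auto
      have "phi * Fm b (X t) (A t) < phi" using phi Fb mult_strict_left_mono[of "Fm b (X t) (A t)" 1 phi] by simp
      moreover have "(1-phi) * A t < 1 - phi" using phi Ab mult_strict_left_mono[of "A t" 1 "1 - phi"] by simp
      moreover have "0 < phi * Fm b (X t) (A t)" using phi Fb by (intro mult_pos_pos) auto
      moreover have "0 < (1-phi) * A t" using phi Ab by (intro mult_pos_pos) auto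
      ultimately have "0 < Y (Suc t)" "Y (Suc t) < 1" unfolding YS by linarith+
      then show ?case using st XS YS Fb by auto
    qed
  qed
  have XB: "\<And>t. 0 < X t \<and> X t < 1" and YB: "\<And>t. 0 < Y t \<and> Y t < 1" using inv by auto
  have AB: "\<And>t. 0 < A t \<and> A t < 1" using A_bd YB by auto
  have recX: "\<And>t. X (Suc t) = Fm b (X t) (A t)"
  proof -
    fix t
    have Aeq: "(P * Y t + Q * (1 - Y t)) / (P + Q) = A t" unfolding A_def ..
    show "X (Suc t) = Fm b (X t) (A t)" using step[OF inv[of t, THEN conjunct1] inv[of t, THEN conjunct2, THEN conjunct1]] XB YB i
      unfolding Aeq X_def by auto
  qed
  have recY: "\<And>t. Y (Suc t) = phi * X (Suc t) + (1-phi) * A t"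
  proof -
    fix t
    have Aeq: "(P * Y t + Q * (1 - Y t)) / (P + Q) = A t" unfolding A_def ..
    note st = step[OF inv[of t, THEN conjunct1] inv[of t, THEN conjunct2, THEN conjunct1], unfolded Aeq]
    have "y (Suc t) i = phi * x (Suc t) i + (1-phi) * A t" using st XB YB i by auto
    then show "Y (Suc t) = phi * X (Suc t) + (1-phi) * A t" unfolding X_def Y_def .
  qed
  have Amono: "\<And>s t. Y s \<le> Y t \<Longrightarrow> A s \<le> A t"
  proof -
    fix s t assume h: "Y s \<le> Y t"
    have e: "(P * Y t + Q * (1 - Y t)) - (P * Y s + Q * (1 - Y s)) = (P - Q) * (Y t - Y s)" by algebra
    have "0 \<le> (P - Q) * (Y t - Y s)" using QP h by simp
    then have "P * Y s + Q * (1 - Y s) \<le> P * Y t + Q * (1 - Y t)" using e by linarith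
    then show "A s \<le> A t" unfolding A_def using PQ0 by (intro divide_right_mono) auto
  qed
  have b0: "0 < b"
  proof -
    have "0 < phi * (ps / pd - 1)" using phi pdps pd0 by simp
    then have "0 < 2 / (phi * (ps / pd - 1) + 2)" by simp
    then show ?thesis using b by linarith
  qed
  have dY: "\<And>t. Y (Suc (Suc t)) - Y (Suc t) = phi * (X (Suc (Suc t)) - X (Suc t)) + (1-phi) * (A (Suc t) - A t)"
    unfolding recY by algebra
  have S_inc: "\<And>t. X t \<le> X (Suc t) \<Longrightarrow> Y t \<le> Y (Suc t) \<Longrightarrow> X (Suc t) \<le> X (Suc (Suc t)) \<and> Y (Suc t) \<le> Y (Suc (Suc t))"
  proof -
    fix t assume h: "X t \<le> X (Suc t)" "Y t \<le> Y (Suc t)"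
    have Am: "A t \<le> A (Suc t)" using Amono h by blast
    have "Fm b (X t) (A t) \<le> Fm b (X (Suc t)) (A (Suc t))"
      using Fm_mono[of b "X t" "X (Suc t)" "A t" "A (Suc t)"] b0 XB AB h Am by auto
    then have 1: "X (Suc t) \<le> X (Suc (Suc t))" unfolding recX[of "Suc t"] recX[of t] .
    have "0 \<le> phi * (X (Suc (Suc t)) - X (Suc t))" using phi 1 by simp
    moreover have "0 \<le> (1-phi) * (A (Suc t) - A t)" using phi Am by simp
    ultimately show "X (Suc t) \<le> X (Suc (Suc t)) \<and> Y (Suc t) \<le> Y (Suc (Suc t))" using 1 dY[of t] by linarith
  qed
  have S_dec: "\<And>t. X (Suc t) \<le> X t \<Longrightarrow> Y (Suc t) \<le> Y t \<Longrightarrow> X (Suc (Suc t)) \<le> X (Suc t) \<and> Y (Suc (Suc t)) \<le> Y (Suc t)"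
  proof -
    fix t assume h: "X (Suc t) \<le> X t" "Y (Suc t) \<le> Y t"
    have Am: "A (Suc t) \<le> A t" using Amono h by blast
    have "Fm b (X (Suc t)) (A (Suc t)) \<le> Fm b (X t) (A t)"
      using Fm_mono[of b "X (Suc t)" "X t" "A (Suc t)" "A t"] b0 XB AB h Am by auto
    then have 1: "X (Suc (Suc t)) \<le> X (Suc t)" unfolding recX[of "Suc t"] recX[of t] .
    have "phi * (X (Suc (Suc t)) - X (Suc t)) \<le> 0" using phi 1 by (simp add: mult_nonneg_nonpos)
    moreover have "(1-phi) * (A (Suc t) - A t) \<le> 0" using phi Am by (simp add: mult_nonneg_nonpos)
    ultimately show "X (Suc (Suc t)) \<le> X (Suc t) \<and> Y (Suc (Suc t)) \<le> Y (Suc t)" using 1 dY[of t] by linarith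
  qed
  have S3: "\<And>t. Y t \<le> Y (Suc t) \<Longrightarrow> X (Suc t) < X (Suc (Suc t)) \<Longrightarrow> Y (Suc t) < Y (Suc (Suc t))"
  proof -
    fix t assume h: "Y t \<le> Y (Suc t)" "X (Suc t) < X (Suc (Suc t))"
    have Am: "A t \<le> A (Suc t)" using Amono h by blast
    have "0 < phi * (X (Suc (Suc t)) - X (Suc t))" using phi h by simp
    moreover have "0 \<le> (1-phi) * (A (Suc t) - A t)" using phi Am by simp
    ultimately show "Y (Suc t) < Y (Suc (Suc t))" using dY[of t] by linarith
  qed
  have S4: "\<And>t. Y (Suc t) \<le> Y t \<Longrightarrow> X (Suc (Suc t)) < X (Suc t) \<Longrightarrow> Y (Suc (Suc t)) < Y (Suc t)"
  proof -
    fix t assume h: "Y (Suc t) \<le> Y t" "X (Suc (Suc t)) < X (Suc t)"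
    have Am: "A (Suc t) \<le> A t" using Amono h by blast
    have "phi * (X (Suc (Suc t)) - X (Suc t)) < 0" using phi h by (simp add: mult_pos_neg)
    moreover have "(1-phi) * (A (Suc t) - A t) \<le> 0" using phi Am by (simp add: mult_nonneg_nonpos)
    ultimately show "Y (Suc (Suc t)) < Y (Suc t)" using dY[of t] by linarith
  qed
  have mono: "\<exists>TT>T. ((\<forall>s\<ge>TT. X s \<le> X (Suc s)) \<or> (\<forall>s\<ge>TT. X (Suc s) \<le> X s)) \<and>
                     ((\<forall>s\<ge>TT. Y s \<le> Y (Suc s)) \<or> (\<forall>s\<ge>TT. Y (Suc s) \<le> Y s))"
  proof (cases "\<exists>t0\<ge>Suc T. X t0 \<le> X (Suc t0) \<and> Y t0 \<le> Y (Suc t0)")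
    case True
    then obtain t0 where t0: "t0 \<ge> Suc T" "X t0 \<le> X (Suc t0)" "Y t0 \<le> Y (Suc t0)" by blast
    have "\<forall>s\<ge>t0. X s \<le> X (Suc s) \<and> Y s \<le> Y (Suc s)"
    proof (intro allI impI)
      fix s assume "t0 \<le> s" then show "X s \<le> X (Suc s) \<and> Y s \<le> Y (Suc s)"
      proof (induction s rule: dec_induct)
        case base then show ?case using t0 by simp
      next
        case (step m) then show ?case using S_inc[of m] by blast
      qed
    qed
    then show ?thesis using t0(1) by (intro exI[of _ t0]) auto
  next
    case F1: False
    show ?thesis
    proof (cases "\<exists>t0\<ge>Suc T. X (Suc t0) \<le> X t0 \<and> Y (Suc t0) \<le> Y t0")
      case True
      then obtain t0 where t0: "t0 \<ge> Suc T" "X (Suc t0) \<le> X t0" "Y (Suc t0) \<le> Y t0" by blast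
      have "\<forall>s\<ge>t0. X (Suc s) \<le> X s \<and> Y (Suc s) \<le> Y s"
      proof (intro allI impI)
        fix s assume "t0 \<le> s" then show "X (Suc s) \<le> X s \<and> Y (Suc s) \<le> Y s"
        proof (induction s rule: dec_induct)
          case base then show ?case using t0 by simp
        next
          case (step m) then show ?case using S_dec[of m] by blast
        qed
      qed
      then show ?thesis using t0(1) by (intro exI[of _ t0]) auto
    next
      case F2: False
      have mix: "\<And>t. t \<ge> Suc T \<Longrightarrow> (X (Suc t) < X t \<and> Y t < Y (Suc t)) \<or> (X t < X (Suc t) \<and> Y (Suc t) < Y t)"
      proof -
        fix t assume t: "t \<ge> Suc T"
        have a1: "\<not> (X t \<le> X (Suc t) \<and> Y t \<le> Y (Suc t))" using F1 t by blast
        have a2: "\<not> (X (Suc t) \<le> X t \<and> Y (Suc t) \<le> Y t)" using F2 t by blast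
        show "(X (Suc t) < X t \<and> Y t < Y (Suc t)) \<or> (X t < X (Suc t) \<and> Y (Suc t) < Y t)"
          using a1 a2 by (auto simp: not_le)
      qed
      consider (m1) "X (Suc (Suc T)) < X (Suc T) \<and> Y (Suc T) < Y (Suc (Suc T))"
        | (m2) "X (Suc T) < X (Suc (Suc T)) \<and> Y (Suc (Suc T)) < Y (Suc T)"
        using mix[of "Suc T"] by auto
      then show ?thesis
      proof cases
        case m1
        have "\<forall>s\<ge>Suc T. X (Suc s) < X s \<and> Y s < Y (Suc s)"
        proof (intro allI impI)
          fix s assume "Suc T \<le> s" then show "X (Suc s) < X s \<and> Y s < Y (Suc s)"
          proof (induction s rule: dec_induct)
            case base then show ?case using m1 by simp
          next
            case (step m)
            have "Suc T \<le> Suc m" using step by simp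
            from mix[OF this] show ?case
            proof
              assume "X (Suc m) < X (Suc (Suc m)) \<and> Y (Suc (Suc m)) < Y (Suc m)"
              moreover have "Y m \<le> Y (Suc m)" using step by simp
              ultimately show ?case using S3[of m] by auto
            qed simp
          qed
        qed
        then show ?thesis by (intro exI[of _ "Suc T"]) (auto intro: less_imp_le)
      next
        case m2
        have "\<forall>s\<ge>Suc T. X s < X (Suc s) \<and> Y (Suc s) < Y s"
        proof (intro allI impI)
          fix s assume "Suc T \<le> s" then show "X s < X (Suc s) \<and> Y (Suc s) < Y s"
          proof (induction s rule: dec_induct)
            case base then show ?case using m2 by simp
          next
            case (step m)
            have "Suc T \<le> Suc m" using step by simp
            from mix[OF this] show ?case
            proof
              assume "X (Suc (Suc m)) < X (Suc m) \<and> Y (Suc m) < Y (Suc (Suc m))"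
              moreover have "Y (Suc m) \<le> Y m" using step by simp
              ultimately show ?case using S4[of m] by auto
            qed simp
          qed
        qed
        then show ?thesis by (intro exI[of _ "Suc T"]) (auto intro: less_imp_le)
      qed
    qed
  qed
  then obtain TT where TT: "TT > T" and mX: "(\<forall>s\<ge>TT. X s \<le> X (Suc s)) \<or> (\<forall>s\<ge>TT. X (Suc s) \<le> X s)"
    and mY: "(\<forall>s\<ge>TT. Y s \<le> Y (Suc s)) \<or> (\<forall>s\<ge>TT. Y (Suc s) \<le> Y s)" by blast
  have MX: "(\<forall>s t. TT \<le> s \<longrightarrow> s \<le> t \<longrightarrow> X s \<le> X t) \<or> (\<forall>s t. TT \<le> s \<longrightarrow> s \<le> t \<longrightarrow> X t \<le> X s)"
    using mX inc_from[of TT X] dec_from[of TT X] by blast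
  have MY: "(\<forall>s t. TT \<le> s \<longrightarrow> s \<le> t \<longrightarrow> Y s \<le> Y t) \<or> (\<forall>s t. TT \<le> s \<longrightarrow> s \<le> t \<longrightarrow> Y t \<le> Y s)"
    using mY inc_from[of TT Y] dec_from[of TT Y] by blast
  have "convergent X" using conv_from[OF MX] XB by (simp add: less_imp_le)
  then obtain L where XL: "X \<longlonglongrightarrow> L" unfolding convergent_def by blast
  have "convergent Y" using conv_from[OF MY] YB by (simp add: less_imp_le)
  then obtain W where YW: "Y \<longlonglongrightarrow> W" unfolding convergent_def by blast
  define M where "M = (P * W + Q * (1 - W)) / (P + Q)"
  have AM: "A \<longlonglongrightarrow> M"
  proof -
    have "(\<lambda>t. (P * Y t + Q * (1 - Y t)) / (P + Q)) \<longlonglongrightarrow> M"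
      unfolding M_def using PQ0 by (intro tendsto_intros YW) auto
    moreover have "(\<lambda>t. (P * Y t + Q * (1 - Y t)) / (P + Q)) = A" by (rule ext) (simp add: A_def)
    ultimately show ?thesis by simp
  qed
  define h where "h = ps / pd"
  have h1: "1 < h" unfolding h_def using pdps pd0 by simp
  define cp where "cp = phi * (h - 1)"
  have cp0: "0 < cp" unfolding cp_def using phi h1 by simp
  have bcp: "2 < b * (cp + 2)"
  proof -
    have "0 < cp + 2" using cp0 by simp
    then show ?thesis using b(1) unfolding cp_def h_def by (simp add: divide_less_eq)
  qed
  have c1: "0 < 1 * (h - 1)" using h1 by simp
  have bc1: "2 < b * (1 * (h - 1) + 2)"
  proof -
    have "cp < 1 * (h - 1)" unfolding cp_def using phi h1 by simp
    then have "b * (cp + 2) < b * (1 * (h - 1) + 2)" using b0 by (intro mult_strict_left_mono) auto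
    then show ?thesis using bcp by linarith
  qed
  note xp = xhat_props[OF b0 b(2) cp0[unfolded cp_def] bcp[unfolded cp_def]]
  note x1p = xhat_props(1)[OF b0 b(2) c1 bc1]
  have hypX: "\<forall>t\<ge>T. x_hat phi h b \<le> X t \<and> X t < x_hat 1 h b" using hyp unfolding X_def h_def by simp
  have Llo: "x_hat phi h b \<le> L" using hypX by (intro LIMSEQ_le_const[OF XL]) auto
  have Lhi: "L \<le> x_hat 1 h b" using hypX by (intro LIMSEQ_le_const2[OF XL]) (auto intro: less_imp_le)
  have L: "1/2 < L" "L < 1" using Llo Lhi xp(1) x1p by linarith+
  have Y01: "\<forall>n. 0 \<le> Y n \<and> Y n \<le> 1" using YB by (simp add: less_imp_le)
  have W: "0 \<le> W" "W \<le> 1"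
  proof -
    show "0 \<le> W" by (rule LIMSEQ_le_const[OF YW]) (use Y01 in blast)
    show "W \<le> 1" by (rule LIMSEQ_le_const2[OF YW]) (use Y01 in blast)
  qed
  have Mb: "0 < M" "M < 1"
  proof -
    have e: "P * W + Q * (1 - W) = Q + (P - Q) * W" by algebra
    have "0 \<le> (P - Q) * W" using QP W by simp
    moreover have "(P - Q) * W \<le> P - Q" using QP W mult_left_mono[of W 1 "P - Q"] by simp
    ultimately have "0 < P * W + Q * (1 - W)" "P * W + Q * (1 - W) < P + Q"
      unfolding e using Q0 by linarith+
    then show "0 < M" "M < 1" unfolding M_def using PQ0 by simp_all
  qed
  have fx: "Fm b L M = L"
  proof -
    have "(\<lambda>t. X (Suc t)) \<longlonglongrightarrow> L" by (rule LIMSEQ_Suc[OF XL])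
    moreover have "(\<lambda>t. X (Suc t)) = (\<lambda>t. Fm b (X t) (A t))" using recX by auto
    ultimately have "(\<lambda>t. Fm b (X t) (A t)) \<longlonglongrightarrow> L" by simp
    moreover have "(\<lambda>t. Fm b (X t) (A t)) \<longlonglongrightarrow> Fm b L M" using L Mb by (intro Fm_tendsto[OF XL AM]) auto
    ultimately show ?thesis using LIMSEQ_unique by blast
  qed
  have fy: "W = phi * L + (1 - phi) * M"
  proof -
    have "(\<lambda>t. Y (Suc t)) \<longlonglongrightarrow> W" by (rule LIMSEQ_Suc[OF YW])
    moreover have "(\<lambda>t. Y (Suc t)) = (\<lambda>t. phi * X (Suc t) + (1-phi) * A t)" using recY by auto
    moreover have "(\<lambda>t. phi * X (Suc t) + (1-phi) * A t) \<longlonglongrightarrow> phi * L + (1 - phi) * M"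
      by (intro tendsto_intros LIMSEQ_Suc[OF XL] AM)
    ultimately show ?thesis using LIMSEQ_unique by metis
  qed
  have e1: "M * (P + Q) = P * W + Q * (1 - W)" unfolding M_def using PQ0 by simp
  define r where "r = L powr (1 - b)"
  define q where "q = (1 - L) powr (1 - b)"
  have rq: "q < r" unfolding r_def q_def using L b by (intro powr_less_mono2) auto
  have Lpow: "L powr b * r = L" unfolding r_def using L by (simp add: powr_add[symmetric])
  have qpow: "(1 - L) powr b * q = 1 - L" unfolding q_def using L by (simp add: powr_add[symmetric])
  have al: "0 < L powr b" "0 < (1 - L) powr b" using L by simp_all
  have den: "0 < L powr b * M + (1 - L) powr b * (1 - M)" using al Mb by (intro add_pos_pos) auto
  have ee: "L * ((1 - L) powr b) * (1 - M) = (1 - L) * (L powr b) * M"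
  proof -
    have "L * (L powr b * M + (1 - L) powr b * (1 - M)) = L powr b * M"
      using fx den unfolding Fm_def by (simp add: divide_eq_eq)
    then show ?thesis by algebra
  qed
  have "(L powr b * r) * ((1 - L) powr b) * (1 - M) = ((1 - L) powr b * q) * (L powr b) * M"
    unfolding Lpow qpow by (rule ee)
  then have "(L powr b * (1 - L) powr b) * (r * (1 - M)) = (L powr b * (1 - L) powr b) * (q * M)"
    by algebra
  moreover have "L powr b * (1 - L) powr b \<noteq> 0" using al by simp
  ultimately have rM: "r * (1 - M) = q * M" by simp
  have key2: "Q * (2 * M - 1) = phi * (P - Q) * (L - M)" using e1 fy by algebra
  have key3: "Q * (r - q) = phi * (P - Q) * (L * q - (1 - L) * r)" using rM key2 by algebra
  have cpe: "cp = phi * (P - Q) / Q" unfolding cp_def h_def PQh using Q0 by (simp add: field_simps)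
  have key4: "r - q = cp * (L * q - (1 - L) * r)"
    unfolding cpe using key3 Q0 by (simp add: field_simps)
  have dnz: "L * q - (1 - L) * r \<noteq> 0" using key4 rq by auto
  have gL: "g_fun L b = phi * (h - 1)"
  proof -
    have "L \<noteq> 1/2" using L by simp
    then have "g_fun L b = (r - q) / (L * q - (1 - L) * r)" unfolding g_fun_def r_def q_def by simp
    also have "\<dots> = cp" using key4 dnz by simp
    finally show ?thesis unfolding cp_def .
  qed
  have Lxh: "x_hat phi h b = L" using xp(2)[OF L gL] .
  have Wform: "W = (phi * (h + 1) * L + 1 - phi) / (phi * h + 2 - phi)"
  proof -
    have k: "W * (phi * P + 2 * Q - phi * Q) = phi * (P + Q) * L + Q * (1 - phi)" using e1 fy by algebra
    have dpos: "0 < phi * h + 2 - phi"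
    proof -
      have "0 < phi * (h - 1)" using phi h1 by simp
      moreover have "phi * (h - 1) = phi * h - phi" by algebra
      ultimately show ?thesis by linarith
    qed
    have "W * (phi * h + 2 - phi) = phi * (h + 1) * L + 1 - phi"
      using k Q0 unfolding h_def PQh by (simp add: field_simps)
    then show ?thesis using dpos by (simp add: eq_divide_eq)
  qed
  have Xe: "(\<lambda>t. x t i) = X" by (rule ext) (simp add: X_def)
  have Ye: "(\<lambda>t. y t i) = Y" by (rule ext) (simp add: Y_def)
  show ?thesis
    apply (rule exI[of _ TT])
    using TT MX MY XL YW Lxh Wform unfolding Xe Ye h_def[symmetric] X_def[symmetric] Y_def[symmetric]
    by auto
qed

end
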